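(* Let $G$ be a character-free complex linear algebraic group. Let $D,D'$ be infinite discrete subsets of $G$ such that the symmetric difference $(D\setminus D')\cup(D'\setminus D)$ is finite. Then $D$ is tame if and only if $D'$ is tame.
   Context: A complex linear algebraic group $G$ is character-free if every morphism of algebraic groups $G\to\mathbb{C}^*$ is trivial. An exhaustion function on $G$ is a continuous $\rho:G\to\mathbb{R}^+$ with all sublevel sets compact. An infinite discrete subset $D$ of a complex manifold $X$ is called tame if for every exhaustion function $\rho$ on $X$ and every map $\zeta:D\to\mathbb{R}^+$ there exists a biholomorphic self-map $\phi$ of $X$ with $\rho(\phi(x))\ge\zeta(x)$ for all $x\in D$. *)

theory Defs
  imports "HOL-Analysis.Analysis"
begin

text \<open>Complex linear algebraic groups are modelled (as usual) as Zariski-closed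
subgroups of GL_n(C), matrices being complex^'n^'n for a finite index type 'n.\<close>

inductive_set poly_fun :: "((complex^'n^'n) \<Rightarrow> complex) set" where
  pf_const: "(\<lambda>A. c) \<in> poly_fun"
| pf_entry: "(\<lambda>A. A $ i $ j) \<in> poly_fun"
| pf_add: "p \<in> poly_fun \<Longrightarrow> q \<in> poly_fun \<Longrightarrow> (\<lambda>A. p A + q A) \<in> poly_fun"
| pf_mult: "p \<in> poly_fun \<Longrightarrow> q \<in> poly_fun \<Longrightarrow> (\<lambda>A. p A * q A) \<in> poly_fun"

definition lin_alg_group :: "(complex^'n^'n) set \<Rightarrow> bool" where
  "lin_alg_group G \<longleftrightarrow>
     (\<exists>P. P \<subseteq> poly_fun \<and> G = {A. invertible A \<and> (\<forall>p\<in>P. p A = 0)}) \<and>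
     mat 1 \<in> G \<and> (\<forall>A\<in>G. \<forall>B\<in>G. A ** B \<in> G) \<and> (\<forall>A\<in>G. matrix_inv A \<in> G)"

definition regular_on :: "(complex^'n^'n) set \<Rightarrow> ((complex^'n^'n) \<Rightarrow> complex) \<Rightarrow> bool" where
  "regular_on G f \<longleftrightarrow> (\<exists>p k. p \<in> poly_fun \<and> (\<forall>A\<in>G. f A = p A / det A ^ k))"

definition character_free :: "(complex^'n^'n) set \<Rightarrow> bool" where
  "character_free G \<longleftrightarrow>
     (\<forall>ch. regular_on G ch \<and> (\<forall>A\<in>G. ch A \<noteq> 0) \<and>
          (\<forall>A\<in>G. \<forall>B\<in>G. ch (A ** B) = ch A * ch B)
          \<longrightarrow> (\<forall>A\<in>G. ch A = 1))"

definition cscale :: "complex \<Rightarrow> complex^'n^'n \<Rightarrow> complex^'n^'n" where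
  "cscale c v = (\<chi> i j. c * v $ i $ j)"

text \<open>Holomorphic maps on the complex submanifold G of C^(n*n): locally restrictions
of complex-differentiable maps on open subsets of the ambient space.\<close>
definition holo_map :: "(complex^'n^'n) set \<Rightarrow> ((complex^'n^'n) \<Rightarrow> (complex^'n^'n)) \<Rightarrow> bool" where
  "holo_map G \<phi> \<longleftrightarrow>
     (\<forall>x\<in>G. \<exists>U F. open U \<and> x \<in> U \<and> (\<forall>z\<in>U \<inter> G. F z = \<phi> z) \<and>
        (\<forall>z\<in>U. \<exists>L. (F has_derivative L) (at z) \<and> (\<forall>c v. L (cscale c v) = cscale c (L v))))"

definition biholo :: "(complex^'n^'n) set \<Rightarrow> ((complex^'n^'n) \<Rightarrow> (complex^'n^'n)) \<Rightarrow> bool" where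
  "biholo G \<phi> \<longleftrightarrow> \<phi> ` G = G \<and> inj_on \<phi> G \<and> holo_map G \<phi> \<and> holo_map G (the_inv_into G \<phi>)"

text \<open>Discrete subset: closed discrete (no accumulation point in G).\<close>
definition discrete_in :: "'a::topological_space set \<Rightarrow> 'a set \<Rightarrow> bool" where
  "discrete_in X D \<longleftrightarrow> D \<subseteq> X \<and> (\<forall>x\<in>X. \<exists>U. open U \<and> x \<in> U \<and> finite (U \<inter> D))"

definition exhaustion :: "'a::topological_space set \<Rightarrow> ('a \<Rightarrow> real) \<Rightarrow> bool" where
  "exhaustion X \<rho> \<longleftrightarrow> continuous_on X \<rho> \<and> (\<forall>x\<in>X. \<rho> x \<ge> 0) \<and>
     (\<forall>c. compact {x\<in>X. \<rho> x \<le> c})"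

definition tame :: "(complex^'n^'n) set \<Rightarrow> (complex^'n^'n) set \<Rightarrow> bool" where
  "tame G D \<longleftrightarrow> infinite D \<and> discrete_in G D \<and>
     (\<forall>\<rho> \<zeta>. exhaustion G \<rho> \<and> (\<forall>x\<in>D. \<zeta> x \<ge> (0::real)) \<longrightarrow>
        (\<exists>\<phi>. biholo G \<phi> \<and> (\<forall>x\<in>D. \<rho> (\<phi> x) \<ge> \<zeta> x)))"

end

theory Submission
  imports Defs
begin


lemma matrix_inv_props:
  assumes "invertible (A::'a::semiring_1^'n^'n)"
  shows "A ** matrix_inv A = mat 1" "matrix_inv A ** A = mat 1"
  using someI_ex[OF assms[unfolded invertible_def]] unfolding matrix_inv_def by auto

lemma mm_lin: fixes g :: "complex^('n::finite)^'n" shows "bounded_linear (\<lambda>v. g ** v)"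
proof -
  have "linear (\<lambda>v. g ** v)"
    by (rule linearI) (simp_all add: matrix_add_ldistrib matrix_scalar_ac scalar_matrix_assoc)
  then show ?thesis by (simp add: linear_conv_bounded_linear)
qed

lemma mm_cscale: fixes g :: "complex^('n::finite)^'n" shows "g ** cscale c v = cscale c (g ** v)"
  by (simp add: cscale_def matrix_matrix_mult_def vec_eq_iff sum_distrib_left mult_ac)

lemma cont_mm:
  assumes "continuous_on S f" "continuous_on S g"
  shows "continuous_on S (\<lambda>x. (f x::complex^('n::finite)^'n) ** g x)"
  unfolding matrix_matrix_mult_def using assms by (intro continuous_intros) auto

lemma tendsto_mm:
  assumes "(f \<longlongrightarrow> a) F" "(g \<longlongrightarrow> b) F"
  shows "((\<lambda>x. (f x::complex^('n::finite)^'n) ** g x) \<longlongrightarrow> a ** b) F"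
  unfolding matrix_matrix_mult_def using assms by (intro tendsto_intros) auto

lemma poly_cont: "p \<in> poly_fun \<Longrightarrow> continuous_on UNIV p"
  by (induction rule: poly_fun.induct) (auto intro!: continuous_intros)

lemma lag_facts:
  assumes "lin_alg_group G"
  shows "\<And>A B. A \<in> G \<Longrightarrow> B \<in> G \<Longrightarrow> A ** B \<in> G"
    and "\<And>A. A \<in> G \<Longrightarrow> matrix_inv A \<in> G"
    and "\<And>A. A \<in> G \<Longrightarrow> invertible A"
  using assms unfolding lin_alg_group_def by auto

lemma lag_cancel:
  assumes "lin_alg_group G" "g \<in> G"
  shows "matrix_inv g ** (g ** y) = y" "g ** (matrix_inv g ** y) = y"
  using matrix_inv_props[OF lag_facts(3)[OF assms]]
  by (simp_all add: matrix_mul_assoc)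

lemma holo_lin: "holo_map G (\<lambda>y. (h::complex^('n::finite)^'n) ** y)"
proof -
  have "((\<lambda>y. h ** y) has_derivative (\<lambda>v. h ** v)) (at z)" for z :: "complex^'n^'n"
    by (rule bounded_linear_imp_has_derivative[OF mm_lin])
  moreover have "\<forall>c v. h ** cscale c v = cscale c (h ** v)" by (simp add: mm_cscale)
  ultimately show ?thesis unfolding holo_map_def
    by (intro ballI exI[of _ UNIV] exI[of _ "\<lambda>y. h ** y"]) blast
qed

lemma holo_cong: "(\<And>x. x \<in> G \<Longrightarrow> \<phi> x = \<psi> x) \<Longrightarrow> holo_map G \<phi> = holo_map G \<psi>"
  unfolding holo_map_def by (metis IntD2)

lemma biholo_comp:
  fixes G :: "(complex^('n::finite)^'n) set"
  assumes G: "lin_alg_group G" and g: "g \<in> G" and b: "biholo G \<phi>"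
  shows "biholo G (\<lambda>y. g ** \<phi> y)"
proof -
  have bb: "\<phi> ` G = G \<and> inj_on \<phi> G \<and> holo_map G \<phi> \<and> holo_map G (the_inv_into G \<phi>)"
    using b unfolding biholo_def .
  note im = bb[THEN conjunct1] and inj = bb[THEN conjunct2, THEN conjunct1]
    and h1 = bb[THEN conjunct2, THEN conjunct2, THEN conjunct1]
    and h2 = bb[THEN conjunct2, THEN conjunct2, THEN conjunct2]
  note mult = lag_facts(1)[OF G] and minv = lag_facts(2)[OF G]
  note canc = lag_cancel[OF G g]
  let ?h = "matrix_inv g"
  have img: "(\<lambda>y. g ** \<phi> y) ` G = G"
  proof
    show "(\<lambda>y. g ** \<phi> y) ` G \<subseteq> G" using im g mult by auto
    show "G \<subseteq> (\<lambda>y. g ** \<phi> y) ` G"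
    proof
      fix z assume z: "z \<in> G"
      then have "?h ** z \<in> G" using minv g mult by auto
      then obtain w where w: "w \<in> G" "\<phi> w = ?h ** z" using im by (metis imageE)
      then have "z = g ** \<phi> w" by (simp add: canc)
      then show "z \<in> (\<lambda>y. g ** \<phi> y) ` G" using w(1) by blast
    qed
  qed
  have injg: "inj_on (\<lambda>y. g ** \<phi> y) G"
  proof (rule inj_onI)
    fix x y assume "x \<in> G" "y \<in> G" "g ** \<phi> x = g ** \<phi> y"
    then have "matrix_inv g ** (g ** \<phi> x) = matrix_inv g ** (g ** \<phi> y)" by simp
    then have "\<phi> x = \<phi> y" by (simp add: canc)
    then show "x = y" using inj \<open>x \<in> G\<close> \<open>y \<in> G\<close> by (meson inj_onD)
  qed
  have hol1: "holo_map G (\<lambda>y. g ** \<phi> y)"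
    unfolding holo_map_def
  proof
    fix x assume "x \<in> G"
    then obtain U F where U: "open U" "x \<in> U" "\<forall>z\<in>U \<inter> G. F z = \<phi> z"
      and D: "\<forall>z\<in>U. \<exists>L. (F has_derivative L) (at z) \<and> (\<forall>c v. L (cscale c v) = cscale c (L v))"
      using bspec[OF h1[unfolded holo_map_def] \<open>x \<in> G\<close>] by (elim exE conjE)
    have "\<forall>z\<in>U. \<exists>L. ((\<lambda>y. g ** F y) has_derivative L) (at z) \<and> (\<forall>c v. L (cscale c v) = cscale c (L v))"
    proof
      fix z assume "z \<in> U"
      then obtain L where L: "(F has_derivative L) (at z)" "\<forall>c v. L (cscale c v) = cscale c (L v)"
        using bspec[OF D \<open>z \<in> U\<close>] by (elim exE conjE)
      have "((\<lambda>y. g ** F y) has_derivative (\<lambda>v. g ** L v)) (at z)"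
        by (rule bounded_linear.has_derivative[OF mm_lin L(1)])
      moreover have "\<forall>c v. g ** L (cscale c v) = cscale c (g ** L v)" using L(2) by (simp add: mm_cscale)
      ultimately show "\<exists>L. ((\<lambda>y. g ** F y) has_derivative L) (at z) \<and> (\<forall>c v. L (cscale c v) = cscale c (L v))"
        by blast
    qed
    moreover have "\<forall>z\<in>U \<inter> G. g ** F z = g ** \<phi> z" using U(3) by simp
    ultimately show "\<exists>U F. open U \<and> x \<in> U \<and> (\<forall>z\<in>U \<inter> G. F z = g ** \<phi> z) \<and>
        (\<forall>z\<in>U. \<exists>L. (F has_derivative L) (at z) \<and> (\<forall>c v. L (cscale c v) = cscale c (L v)))"
      using U(1,2) by (intro exI[of _ U] exI[of _ "\<lambda>y. g ** F y"] conjI)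
  qed
  have invf: "the_inv_into G (\<lambda>y. g ** \<phi> y) z = the_inv_into G \<phi> (?h ** z)" if z: "z \<in> G" for z
  proof -
    have hz: "?h ** z \<in> G" using z minv g mult by auto
    let ?w = "the_inv_into G \<phi> (?h ** z)"
    have "?w \<in> G" by (rule the_inv_into_into[OF inj]) (use hz im in auto)
    moreover have "\<phi> ?w = ?h ** z" by (rule f_the_inv_into_f[OF inj]) (use hz im in auto)
    ultimately show ?thesis by (intro the_inv_into_f_eq[OF injg]) (simp_all add: canc)
  qed
  have hol2: "holo_map G (\<lambda>z. the_inv_into G \<phi> (?h ** z))"
    unfolding holo_map_def
  proof
    fix x assume x: "x \<in> G"
    then have hx: "?h ** x \<in> G" using minv g mult by auto
    then obtain U F where U: "open U" "?h ** x \<in> U" "\<forall>z\<in>U \<inter> G. F z = the_inv_into G \<phi> z"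
      and D: "\<forall>z\<in>U. \<exists>L. (F has_derivative L) (at z) \<and> (\<forall>c v. L (cscale c v) = cscale c (L v))"
      using bspec[OF h2[unfolded holo_map_def] hx] by (elim exE conjE)
    let ?V = "(\<lambda>z. ?h ** z) -` U"
    have oV: "open ?V"
      by (rule open_vimage[OF U(1)]) (rule linear_continuous_on[OF mm_lin])
    have "\<forall>z\<in>?V. \<exists>L. ((\<lambda>y. F (?h ** y)) has_derivative L) (at z) \<and> (\<forall>c v. L (cscale c v) = cscale c (L v))"
    proof
      fix z assume "z \<in> ?V"
      then obtain L where L: "(F has_derivative L) (at (?h ** z))" "\<forall>c v. L (cscale c v) = cscale c (L v)"
        using bspec[OF D, of "matrix_inv g ** z"] \<open>z \<in> ?V\<close> by (auto elim!: exE conjE)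
      have "(((\<lambda>y. F y) \<circ> (\<lambda>y. ?h ** y)) has_derivative (L \<circ> (\<lambda>v. ?h ** v))) (at z)"
        by (rule diff_chain_at[OF bounded_linear_imp_has_derivative[OF mm_lin]]) (use L in simp)
      then have "((\<lambda>y. F (?h ** y)) has_derivative (\<lambda>v. L (?h ** v))) (at z)" by (simp add: o_def)
      moreover have "\<forall>c v. L (?h ** cscale c v) = cscale c (L (?h ** v))" using L(2) by (simp add: mm_cscale)
      ultimately show "\<exists>L. ((\<lambda>y. F (?h ** y)) has_derivative L) (at z) \<and> (\<forall>c v. L (cscale c v) = cscale c (L v))"
        by blast
    qed
    moreover have "\<forall>z\<in>?V \<inter> G. F (?h ** z) = the_inv_into G \<phi> (?h ** z)"
    proof
      fix z assume "z \<in> ?V \<inter> G"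
      then have "?h ** z \<in> U \<inter> G" using minv g mult by auto
      then show "F (?h ** z) = the_inv_into G \<phi> (?h ** z)" using U(3) by blast
    qed
    ultimately show "\<exists>U F. open U \<and> x \<in> U \<and> (\<forall>z\<in>U \<inter> G. F z = the_inv_into G \<phi> (?h ** z)) \<and>
        (\<forall>z\<in>U. \<exists>L. (F has_derivative L) (at z) \<and> (\<forall>c v. L (cscale c v) = cscale c (L v)))"
      using oV U(2) by (intro exI[of _ ?V] exI[of _ "\<lambda>y. F (?h ** y)"] conjI) auto
  qed
  have "holo_map G (the_inv_into G (\<lambda>y. g ** \<phi> y)) = holo_map G (\<lambda>z. the_inv_into G \<phi> (?h ** z))"
    by (rule holo_cong) (rule invf)
  then have "holo_map G (the_inv_into G (\<lambda>y. g ** \<phi> y))" using hol2 by simp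
  then show ?thesis unfolding biholo_def using img injg hol1 by (intro conjI)
qed

lemma biholo_id: "biholo G (\<lambda>x. x)"
proof -
  have "holo_map G (\<lambda>y. mat 1 ** y)" by (rule holo_lin)
  then have h: "holo_map G (\<lambda>y. y)" by simp
  have "the_inv_into G (\<lambda>y. y) x = x" if "x \<in> G" for x
    using that by (intro the_inv_into_f_eq) auto
  then have "holo_map G (the_inv_into G (\<lambda>y. y))" using h holo_cong[of G "the_inv_into G (\<lambda>y. y)" "\<lambda>y. y"]
    by auto
  then show ?thesis unfolding biholo_def using h by auto
qed

lemma exh_min:
  fixes G :: "(complex^('n::finite)^'n) set"
  assumes G: "lin_alg_group G" and g: "g \<in> G" and e: "exhaustion G \<rho>"
  shows "exhaustion G (\<lambda>y. min (\<rho> y) (\<rho> (g ** y)))"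
proof -
  note mult = lag_facts(1)[OF G] and minv = lag_facts(2)[OF G]
  note canc = lag_cancel[OF G g]
  let ?h = "matrix_inv g"
  have c: "continuous_on G \<rho>" and nn: "\<forall>x\<in>G. \<rho> x \<ge> 0" and cp: "\<And>c. compact {x\<in>G. \<rho> x \<le> c}"
    using e unfolding exhaustion_def by auto
  have c2: "continuous_on G (\<lambda>y. \<rho> (g ** y))"
    by (rule continuous_on_compose2[OF c linear_continuous_on[OF mm_lin]]) (use g mult in auto)
  have "compact {x\<in>G. min (\<rho> x) (\<rho> (g ** x)) \<le> c}" for c
  proof -
    have "{x\<in>G. min (\<rho> x) (\<rho> (g ** x)) \<le> c} = {x\<in>G. \<rho> x \<le> c} \<union> (\<lambda>y. ?h ** y) ` {x\<in>G. \<rho> x \<le> c}"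
    proof (rule set_eqI, rule iffI)
      fix x assume "x \<in> {x\<in>G. min (\<rho> x) (\<rho> (g ** x)) \<le> c}"
      then have x: "x \<in> G" "\<rho> x \<le> c \<or> \<rho> (g ** x) \<le> c" by auto
      have gx: "g ** x \<in> G" using x g mult by auto
      have xe: "x = ?h ** (g ** x)" by (simp add: canc)
      show "x \<in> {x\<in>G. \<rho> x \<le> c} \<union> (\<lambda>y. ?h ** y) ` {x\<in>G. \<rho> x \<le> c}"
      proof (cases "\<rho> x \<le> c")
        case True then show ?thesis using x(1) by simp
      next
        case False
        then have "\<rho> (g ** x) \<le> c" using x(2) by simp
        then have "g ** x \<in> {x\<in>G. \<rho> x \<le> c}" using gx by simp
        then have "?h ** (g ** x) \<in> (\<lambda>y. ?h ** y) ` {x\<in>G. \<rho> x \<le> c}" by (rule imageI)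
        then show ?thesis using xe by simp
      qed
    next
      fix x assume "x \<in> {x\<in>G. \<rho> x \<le> c} \<union> (\<lambda>y. ?h ** y) ` {x\<in>G. \<rho> x \<le> c}"
      then show "x \<in> {x\<in>G. min (\<rho> x) (\<rho> (g ** x)) \<le> c}"
      proof
        assume "x \<in> {x\<in>G. \<rho> x \<le> c}" then show ?thesis by auto
      next
        assume "x \<in> (\<lambda>y. ?h ** y) ` {x\<in>G. \<rho> x \<le> c}"
        then obtain y where y: "y \<in> G" "\<rho> y \<le> c" "x = ?h ** y" by auto
        then have "x \<in> G" using minv g mult by auto
        moreover have "g ** x = y" using y by (simp add: canc)
        ultimately show ?thesis using y by auto
      qed
    qed
    moreover have "compact ((\<lambda>y. ?h ** y) ` {x\<in>G. \<rho> x \<le> c})"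
      by (rule compact_continuous_image[OF linear_continuous_on[OF mm_lin] cp])
    then have "compact ({x\<in>G. \<rho> x \<le> c} \<union> (\<lambda>y. ?h ** y) ` {x\<in>G. \<rho> x \<le> c})"
      by (rule compact_Un[OF cp])
    ultimately show ?thesis by simp
  qed
  moreover have "\<forall>x\<in>G. min (\<rho> x) (\<rho> (g ** x)) \<ge> 0" using nn g mult by auto
  ultimately show ?thesis unfolding exhaustion_def using continuous_on_min[OF c c2] by (intro conjI allI) auto
qed

lemma mm_zero: "(A::complex^('n::finite)^'n) ** 0 = 0"
  by (simp add: matrix_matrix_mult_def vec_eq_iff)

lemma mat1_nz: "(mat 1 :: complex^('n::finite)^'n) \<noteq> 0"
proof
  assume "(mat 1 :: complex^('n::finite)^'n) = 0"
  then have "(mat 1 :: complex^('n::finite)^'n) $ undefined $ undefined = 0" by simp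
  then show False by (simp add: mat_def)
qed

lemma inv_bound:
  fixes C :: "(complex^('n::finite)^'n) set"
  assumes cC: "compact C" and inv: "\<And>y. y \<in> C \<Longrightarrow> invertible y"
  shows "\<exists>K. \<forall>y\<in>C. \<forall>w. y ** w = mat 1 \<longrightarrow> norm w \<le> K"
proof (cases "C = {}")
  case True then show ?thesis by auto
next
  case False
  let ?S = "C \<times> sphere (0::complex^'n^'n) 1"
  have cS: "compact ?S" using cC by (intro compact_Times) auto
  have "sgn (mat 1 :: complex^'n^'n) \<in> sphere 0 1" using mat1_nz by (simp add: norm_sgn)
  then have neS: "?S \<noteq> {}" using False by auto
  have cont: "continuous_on ?S (\<lambda>p. norm (fst p ** snd p))"
    by (intro continuous_on_norm cont_mm continuous_on_fst continuous_on_snd continuous_on_id)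
  obtain p0 where p0: "p0 \<in> ?S" "\<forall>p\<in>?S. norm (fst p0 ** snd p0) \<le> norm (fst p ** snd p)"
    using continuous_attains_inf[OF cS neS cont] by blast
  define \<delta> where "\<delta> = norm (fst p0 ** snd p0)"
  have y0: "fst p0 \<in> C" and u0: "norm (snd p0) = 1" using p0(1) by (auto simp: mem_Times_iff)
  have dpos: "\<delta> > 0"
  proof -
    have "fst p0 ** snd p0 \<noteq> 0"
    proof
      assume h: "fst p0 ** snd p0 = 0"
      have "snd p0 = matrix_inv (fst p0) ** (fst p0 ** snd p0)"
        using matrix_inv_props(2)[OF inv[OF y0]] by (simp add: matrix_mul_assoc)
      also have "\<dots> = 0" using h by (simp add: mm_zero)
      finally show False using u0 by simp
    qed
    then show ?thesis unfolding \<delta>_def by simp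
  qed
  show ?thesis
  proof (intro exI ballI allI impI)
    fix y w assume y: "y \<in> C" and yw: "y ** w = mat 1"
    have wnz: "w \<noteq> 0" using yw mat1_nz by (auto simp: mm_zero)
    then have nw: "norm w > 0" by simp
    let ?u = "(1 / norm w) *\<^sub>R w"
    have "?u \<in> sphere 0 1" using wnz by simp
    then have "(y, ?u) \<in> ?S" using y by simp
    then have "\<delta> \<le> norm (y ** ?u)" using p0(2) unfolding \<delta>_def by (metis fst_conv snd_conv)
    also have "y ** ?u = (1 / norm w) *\<^sub>R (y ** w)" by (simp add: matrix_scalar_ac scalar_matrix_assoc)
    also have "norm \<dots> = norm (mat 1 :: complex^'n^'n) / norm w" using yw nw by simp
    finally have "\<delta> \<le> norm (mat 1 :: complex^'n^'n) / norm w" .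
    then have "\<delta> * norm w \<le> norm (mat 1 :: complex^'n^'n)" using nw by (simp add: field_simps)
    then show "norm w \<le> norm (mat 1 :: complex^'n^'n) / \<delta>" using dpos by (simp add: field_simps)
  qed
qed

lemma G_unbounded:
  fixes G :: "(complex^('n::finite)^'n) set"
  assumes G: "lin_alg_group G" and inf: "infinite D" and dis: "discrete_in G D"
  shows "\<not> bounded G"
proof
  assume bG: "bounded G"
  obtain P where P: "P \<subseteq> poly_fun" "G = {A. invertible A \<and> (\<forall>p\<in>P. p A = 0)}"
    using G unfolding lin_alg_group_def by blast
  note minv = lag_facts(2)[OF G] and ginv = lag_facts(3)[OF G]
  have cl: "closed G"
    unfolding closed_sequential_limits
  proof (intro allI impI, elim conjE)
    fix X l assume XG: "\<forall>n. X n \<in> G" and lim: "X \<longlonglongrightarrow> l"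
    have cc: "compact (closure G)" using bG compact_closure by auto
    have "\<forall>n. matrix_inv (X n) \<in> closure G" using XG minv closure_subset by blast
    then obtain e r where r: "strict_mono r" "((\<lambda>n. matrix_inv (X n)) \<circ> r) \<longlonglongrightarrow> e"
      using seq_compactE[OF compact_imp_seq_compact[OF cc]] by metis
    have limr: "(\<lambda>n. X (r n)) \<longlonglongrightarrow> l" using LIMSEQ_subseq_LIMSEQ[OF lim r(1)] by (simp add: o_def)
    have lime: "(\<lambda>n. matrix_inv (X (r n))) \<longlonglongrightarrow> e" using r(2) by (simp add: o_def)
    have e1: "(\<lambda>n. X (r n) ** matrix_inv (X (r n))) = (\<lambda>n. mat 1)"
      using XG matrix_inv_props(1)[OF ginv] by auto
    have e2: "(\<lambda>n. matrix_inv (X (r n)) ** X (r n)) = (\<lambda>n. mat 1)"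
      using XG matrix_inv_props(2)[OF ginv] by auto
    have "(\<lambda>n. X (r n) ** matrix_inv (X (r n))) \<longlonglongrightarrow> l ** e" by (rule tendsto_mm[OF limr lime])
    then have le: "l ** e = mat 1" unfolding e1 using LIMSEQ_unique tendsto_const by blast
    have "(\<lambda>n. matrix_inv (X (r n)) ** X (r n)) \<longlonglongrightarrow> e ** l" by (rule tendsto_mm[OF lime limr])
    then have el: "e ** l = mat 1" unfolding e2 using LIMSEQ_unique tendsto_const by blast
    have il: "invertible l" unfolding invertible_def using le el by blast
    have "p l = 0" if p: "p \<in> P" for p
    proof -
      have "continuous_on UNIV p" using poly_cont p P(1) by blast
      then have "isCont p l" by (simp add: continuous_on_eq_continuous_at)
      then have "(\<lambda>n. p (X n)) \<longlonglongrightarrow> p l" using lim isCont_tendsto_compose by blast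
      moreover have "(\<lambda>n. p (X n)) = (\<lambda>n. 0)" using XG P(2) p by auto
      ultimately show ?thesis using LIMSEQ_unique tendsto_const by metis
    qed
    then show "l \<in> G" using il P(2) by blast
  qed
  then have "compact G" using bG compact_eq_bounded_closed by blast
  moreover have "D \<subseteq> G" using dis unfolding discrete_in_def by blast
  ultimately obtain x where x: "x \<in> G" "x islimpt D"
    using inf unfolding compact_eq_Bolzano_Weierstrass by blast
  then obtain U where U: "open U" "x \<in> U" "finite (U \<inter> D)"
    using dis unfolding discrete_in_def by blast
  then obtain e where e: "e > 0" "ball x e \<subseteq> U" using open_contains_ball by blast
  have "infinite (D \<inter> ball x e)" using x(2) e(1) islimpt_eq_infinite_ball by blast
  moreover have "D \<inter> ball x e \<subseteq> U \<inter> D" using e(2) by blast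
  ultimately show False using U(3) finite_subset by blast
qed

lemma shift_exists:
  fixes G :: "(complex^('n::finite)^'n) set"
  assumes G: "lin_alg_group G" and inf: "infinite D" and dis: "discrete_in G D"
    and cC: "compact C" and CG: "C \<subseteq> G"
  shows "\<exists>g\<in>G. \<forall>y\<in>C. g ** y \<notin> C"
proof (rule ccontr)
  assume "\<not> ?thesis"
  then have bad: "\<forall>g\<in>G. \<exists>y\<in>C. g ** y \<in> C" by blast
  note ginv = lag_facts(3)[OF G]
  obtain K where K: "\<forall>y\<in>C. \<forall>w. y ** w = mat 1 \<longrightarrow> norm w \<le> K"
    using inv_bound[OF cC] ginv CG by blast
  define Inv where "Inv = {p::(complex^'n^'n) \<times> (complex^'n^'n). fst p \<in> C \<and> fst p ** snd p = (mat 1 :: complex^'n^'n)}"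
  have cI: "compact Inv"
  proof -
    have "Inv \<subseteq> C \<times> cball 0 K" using K unfolding Inv_def by (auto simp: mem_Times_iff)
    then have bI: "bounded Inv"
      using bounded_subset bounded_Times[OF compact_imp_bounded[OF cC] bounded_cball] by blast
    have eq: "Inv = (C \<times> UNIV) \<inter> {p::(complex^'n^'n) \<times> (complex^'n^'n). fst p ** snd p = (mat 1 :: complex^'n^'n)}"
      unfolding Inv_def by auto
    have cm: "continuous_on UNIV (\<lambda>p::(complex^'n^'n) \<times> (complex^'n^'n). fst p ** snd p)"
      by (rule cont_mm) (auto intro: continuous_on_fst continuous_on_snd continuous_on_id)
    have "closed {p::(complex^'n^'n) \<times> (complex^'n^'n). fst p ** snd p = (mat 1 :: complex^'n^'n)}"
      by (rule closed_Collect_eq[OF cm continuous_on_const])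
    then have "closed Inv" unfolding eq using compact_imp_closed[OF cC]
      by (intro closed_Int closed_Times) auto
    then show ?thesis using bI compact_eq_bounded_closed by blast
  qed
  define Q where "Q = (\<lambda>q. fst q ** snd (snd q)) ` (C \<times> Inv)"
  have cQ: "compact Q" unfolding Q_def
    by (intro compact_continuous_image compact_Times cC cI cont_mm continuous_on_fst continuous_on_snd continuous_on_id)
  have "G \<subseteq> Q"
  proof
    fix g assume g: "g \<in> G"
    then obtain y where y: "y \<in> C" "g ** y \<in> C" using bad by blast
    have iy: "invertible y" using y CG ginv by blast
    let ?w = "matrix_inv y"
    have "(y, ?w) \<in> Inv" unfolding Inv_def using y matrix_inv_props(1)[OF iy] by simp
    then have "(g ** y, (y, ?w)) \<in> C \<times> Inv" using y by simp
    moreover have "g = (g ** y) ** ?w" using matrix_inv_props(1)[OF iy] by (simp add: matrix_mul_assoc[symmetric])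
    ultimately show "g \<in> Q" unfolding Q_def by (metis (no_types, lifting) fst_conv snd_conv image_eqI)
  qed
  then have "bounded G" using compact_imp_bounded[OF cQ] bounded_subset by blast
  then show False using G_unbounded[OF G inf dis] by blast
qed

lemma tameD:
  assumes "tame G D" "exhaustion G \<rho>" "\<forall>x\<in>D. \<zeta> x \<ge> (0::real)"
  shows "\<exists>\<phi>. biholo G \<phi> \<and> (\<forall>x\<in>D. \<rho> (\<phi> x) \<ge> \<zeta> x)"
  using assms unfolding tame_def by blast

lemma tameI:
  assumes "infinite D" "discrete_in G D"
    "\<And>\<rho> \<zeta>. exhaustion G \<rho> \<Longrightarrow> \<forall>x\<in>D. \<zeta> x \<ge> (0::real) \<Longrightarrow> \<exists>\<phi>. biholo G \<phi> \<and> (\<forall>x\<in>D. \<rho> (\<phi> x) \<ge> \<zeta> x)"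
  shows "tame G D"
  using assms unfolding tame_def by blast

lemma tame_insert:
  fixes G :: "(complex^('n::finite)^'n) set"
  assumes G: "lin_alg_group G" and t: "tame G D" and f: "f \<in> G"
    and dis: "discrete_in G (insert f D)"
  shows "tame G (insert f D)"
proof -
  have infD: "infinite D" and disD: "discrete_in G D"
    using t unfolding tame_def by blast+
  note tD = tameD[OF t]
  note mult = lag_facts(1)[OF G]
  have "\<exists>\<phi>. biholo G \<phi> \<and> (\<forall>x\<in>insert f D. \<rho> (\<phi> x) \<ge> \<zeta> x)"
    if e: "exhaustion G \<rho>" and z: "\<forall>x\<in>insert f D. \<zeta> x \<ge> 0" for \<rho> \<zeta>
  proof -
    let ?C = "{x\<in>G. \<rho> x \<le> \<zeta> f}"
    have cC: "compact ?C" using e unfolding exhaustion_def by blast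
    obtain g where g: "g \<in> G" "\<forall>y\<in>?C. g ** y \<notin> ?C"
      using shift_exists[OF G infD disD cC] by blast
    have e0: "exhaustion G (\<lambda>y. min (\<rho> y) (\<rho> (g ** y)))" by (rule exh_min[OF G g(1) e])
    obtain \<phi> where ph: "biholo G \<phi>" "\<forall>x\<in>D. min (\<rho> (\<phi> x)) (\<rho> (g ** \<phi> x)) \<ge> \<zeta> x"
      using tD[OF e0, of \<zeta>] z by auto
    have "\<phi> ` G = G" using ph(1) unfolding biholo_def by blast
    then have pf: "\<phi> f \<in> G" using f by blast
    show ?thesis
    proof (cases "\<rho> (\<phi> f) \<ge> \<zeta> f")
      case True
      have "\<forall>x\<in>insert f D. \<rho> (\<phi> x) \<ge> \<zeta> x" using True ph(2) by auto
      then show ?thesis using ph(1) by blast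
    next
      case False
      then have "\<phi> f \<in> ?C" using pf by simp
      then have "g ** \<phi> f \<notin> ?C" using g(2) by blast
      moreover have "g ** \<phi> f \<in> G" using g(1) pf mult by blast
      ultimately have "\<rho> (g ** \<phi> f) \<ge> \<zeta> f" by simp
      then have "\<forall>x\<in>insert f D. \<rho> (g ** \<phi> x) \<ge> \<zeta> x" using ph(2) by auto
      then show ?thesis using biholo_comp[OF G g(1) ph(1)] by blast
    qed
  qed
  moreover have "infinite (insert f D)" using infD by simp
  ultimately show ?thesis using dis by (intro tameI) auto
qed

lemma tame_subset:
  assumes t: "tame G D" and sub: "D' \<subseteq> D" and inf: "infinite D'" and dis: "discrete_in G D'"
  shows "tame G D'"
proof -
  have "\<exists>\<phi>. biholo G \<phi> \<and> (\<forall>x\<in>D'. \<rho> (\<phi> x) \<ge> \<zeta> x)"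
    if e: "exhaustion G \<rho>" and z: "\<forall>x\<in>D'. \<zeta> x \<ge> 0" for \<rho> \<zeta>
  proof -
    let ?z = "\<lambda>x. if x \<in> D' then \<zeta> x else 0"
    have "\<forall>x\<in>D. ?z x \<ge> 0" using z by auto
    then obtain \<phi> where ph: "biholo G \<phi>" "\<forall>x\<in>D. \<rho> (\<phi> x) \<ge> ?z x"
      using tameD[OF t e, of ?z] by blast
    have "\<forall>x\<in>D'. \<rho> (\<phi> x) \<ge> \<zeta> x"
    proof
      fix x assume "x \<in> D'"
      then have xD: "x \<in> D" using sub by blast
      have "\<rho> (\<phi> x) \<ge> ?z x" using ph(2) xD by blast
      then show "\<rho> (\<phi> x) \<ge> \<zeta> x" using \<open>x \<in> D'\<close> by simp
    qed
    then show ?thesis using ph(1) by blast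
  qed
  then show ?thesis using inf dis by (intro tameI) auto
qed

lemma discrete_union_finite:
  assumes "discrete_in G D" "finite F" "F \<subseteq> G"
  shows "discrete_in G (D \<union> F)"
  unfolding discrete_in_def
proof (intro conjI ballI)
  show "D \<union> F \<subseteq> G" using assms unfolding discrete_in_def by blast
  fix x assume "x \<in> G"
  then obtain U where U: "open U" "x \<in> U" "finite (U \<inter> D)" using assms(1) unfolding discrete_in_def by blast
  have "U \<inter> (D \<union> F) \<subseteq> (U \<inter> D) \<union> F" by blast
  moreover have "finite ((U \<inter> D) \<union> F)" using U(3) assms(2) by simp
  ultimately have "finite (U \<inter> (D \<union> F))" by (rule finite_subset)
  then show "\<exists>U. open U \<and> x \<in> U \<and> finite (U \<inter> (D \<union> F))" using U(1,2) by blast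
qed

lemma tame_union_finite:
  fixes G :: "(complex^('n::finite)^'n) set"
  assumes G: "lin_alg_group G" and t: "tame G D" and fin: "finite F"
  shows "F \<subseteq> G \<Longrightarrow> tame G (D \<union> F)"
  using fin
proof (induction F rule: finite_induct)
  case empty then show ?case using t by simp
next
  case (insert x F)
  have disD: "discrete_in G D" using t unfolding tame_def by blast
  have "tame G (D \<union> F)" using insert by blast
  moreover have "discrete_in G (insert x (D \<union> F))"
    using discrete_union_finite[OF disD, of "insert x F"] insert by simp
  ultimately have "tame G (insert x (D \<union> F))" using tame_insert[OF G] insert by blast
  then show ?case by simp
qed

lemma one_dir:
  fixes G :: "(complex^('n::finite)^'n) set"
  assumes G: "lin_alg_group G" and inf': "infinite D'" and dis': "discrete_in G D'"
    and fin: "finite (D' - D)" and t: "tame G D"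
  shows "tame G D'"
proof -
  have "D' - D \<subseteq> G" using dis' unfolding discrete_in_def by blast
  then have "tame G (D \<union> (D' - D))" using tame_union_finite[OF G t fin] by blast
  moreover have "D' \<subseteq> D \<union> (D' - D)" by blast
  ultimately show ?thesis using tame_subset inf' dis' by blast
qed

theorem corollary2p4:
  fixes G D D' :: "(complex^'n^'n) set"
  assumes "lin_alg_group G" and "character_free G"
    and "infinite D" and "discrete_in G D"
    and "infinite D'" and "discrete_in G D'"
    and "finite ((D - D') \<union> (D' - D))"
  shows "tame G D \<longleftrightarrow> tame G D'"
proof
  assume "tame G D"
  then show "tame G D'" using one_dir[OF assms(1,5,6)] assms(7) by blast
next
  assume "tame G D'"
  then show "tame G D" using one_dir[OF assms(1,3,4)] assms(7) by blast
qed

end
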